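(* Assume that $\sigma_1,\sigma_2:\mathbb{R}^d\to(0,\infty]$ satisfy \[ \inf_{x\in\mathbb{R}^d}\{\sigma_1(x),\sigma_2(x)\}>h>0,\qquad \|\sigma_1-\sigma_2\|_{L^\infty(\mathbb{R}^d)}\le M<\infty. \] Then there exists $C=C(d,h,M)$ such that \[ \|f\|_{\widetilde H^{1/2}_{\sigma_1}(\mathbb{R}^d)}\le C\|f\|_{\widetilde H^{1/2}_{\sigma_2}(\mathbb{R}^d)}\qquad\forall f\in\widetilde H^{1/2}_{\sigma_2}(\mathbb{R}^d). \]
   Context: For a lower semicontinuous $\Theta:\mathbb{R}^d\to(0,\infty]$, the screened Sobolev space is \[ \widetilde H^{1/2}_\Theta(\mathbb{R}^d)=\Big\{f\in\mathcal S'(\mathbb{R}^d)\cap L^2_{loc}(\mathbb{R}^d):\int_{\mathbb{R}^d}\int_{|k|<\Theta(x)}\frac{|f(x+k)-f(x)|^2}{|k|^{d+1}}\,dk\,dx<\infty\Big\}\Big/\mathbb{R}, \] with $\|f\|^2_{\widetilde H^{1/2}_\Theta}$ equal to the double integral. *)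

theory Defs
  imports "HOL-Analysis.Analysis"
begin

definition lsc_ereal :: "('a::topological_space \<Rightarrow> ereal) \<Rightarrow> bool" where
  "lsc_ereal \<Theta> \<longleftrightarrow> (\<forall>t::ereal. open {x. t < \<Theta> x})"

definition L2_loc :: "('a::euclidean_space \<Rightarrow> real) set" where
  "L2_loc = {f. f \<in> borel_measurable lborel \<and>
      (\<forall>K. compact K \<longrightarrow> (\<integral>\<^sup>+x\<in>K. ennreal ((f x)\<^sup>2) \<partial>lborel) < \<infinity>)}"

definition screened_sq :: "('a::euclidean_space \<Rightarrow> ereal) \<Rightarrow> ('a \<Rightarrow> real) \<Rightarrow> ennreal" where
  "screened_sq \<Theta> f =
     (\<integral>\<^sup>+x. (\<integral>\<^sup>+k. indicator {k. ereal (norm k) < \<Theta> x} k *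
         ennreal ((f (x + k) - f x)\<^sup>2 / norm k ^ (DIM('a) + 1)) \<partial>lborel) \<partial>lborel)"

definition screened_norm :: "('a::euclidean_space \<Rightarrow> ereal) \<Rightarrow> ('a \<Rightarrow> real) \<Rightarrow> ennreal" where
  "screened_norm \<Theta> f =
     (if screened_sq \<Theta> f = \<infinity> then \<infinity> else ennreal (sqrt (enn2real (screened_sq \<Theta> f))))"

text \<open>Membership in the screened space (representatives; the quotient by constants is
  immaterial since the seminorm is invariant under adding constants).\<close>
definition screened_space :: "('a::euclidean_space \<Rightarrow> ereal) \<Rightarrow> ('a \<Rightarrow> real) set" where
  "screened_space \<Theta> = {f. f \<in> L2_loc \<and> screened_sq \<Theta> f < \<infinity>}"

end

theory Submission
  imports Defs
begin


lemma nn_transl: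
  fixes g :: "'a::euclidean_space \<Rightarrow> ennreal"
  assumes [measurable]: "g \<in> borel_measurable borel"
  shows "(\<integral>\<^sup>+x. g (t + x) \<partial>lborel) = (\<integral>\<^sup>+x. g x \<partial>lborel)"
proof -
  have "(\<integral>\<^sup>+x. g x \<partial>lborel) = (\<integral>\<^sup>+x. g x \<partial>(distr lborel borel ((+) t)))"
    by (simp add: lborel_distr_plus)
  also have "\<dots> = (\<integral>\<^sup>+x. g (t + x) \<partial>lborel)"
    by (subst nn_integral_distr) auto
  finally show ?thesis ..
qed

lemma nn_affine:
  fixes g :: "'a::euclidean_space \<Rightarrow> ennreal"
  assumes [measurable]: "g \<in> borel_measurable borel" and "c \<noteq> 0"
  shows "(\<integral>\<^sup>+x. g x \<partial>lborel) = ennreal (\<bar>c\<bar>^DIM('a)) * (\<integral>\<^sup>+x. g (t + c *\<^sub>R x) \<partial>lborel)"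
proof -
  have "(\<integral>\<^sup>+x. g x \<partial>lborel) = (\<integral>\<^sup>+x. g x \<partial>(density (distr lborel borel (\<lambda>x. t + c *\<^sub>R x)) (\<lambda>_. \<bar>c\<bar>^DIM('a))))"
    using lborel_affine[OF assms(2), of t] by simp
  also have "\<dots> = (\<integral>\<^sup>+x. ennreal (\<bar>c\<bar>^DIM('a)) * g x \<partial>(distr lborel borel (\<lambda>x. t + c *\<^sub>R x)))"
    by (subst nn_integral_density) auto
  also have "\<dots> = (\<integral>\<^sup>+x. ennreal (\<bar>c\<bar>^DIM('a)) * g (t + c *\<^sub>R x) \<partial>lborel)"
    by (subst nn_integral_distr) auto
  also have "\<dots> = ennreal (\<bar>c\<bar>^DIM('a)) * (\<integral>\<^sup>+x. g (t + c *\<^sub>R x) \<partial>lborel)"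
    by (rule nn_integral_cmult) auto
  finally show ?thesis .
qed

lemma nn_refl:
  fixes g :: "'a::euclidean_space \<Rightarrow> ennreal"
  assumes [measurable]: "g \<in> borel_measurable borel"
  shows "(\<integral>\<^sup>+x. g (t - x) \<partial>lborel) = (\<integral>\<^sup>+x. g x \<partial>lborel)"
  using nn_affine[OF assms, of "-1" t] by simp

lemma nn_scale:
  fixes g :: "'a::euclidean_space \<Rightarrow> ennreal"
  assumes [measurable]: "g \<in> borel_measurable borel" and "c > 0"
  shows "(\<integral>\<^sup>+x. g x \<partial>lborel) = ennreal (c^DIM('a)) * (\<integral>\<^sup>+x. g (c *\<^sub>R x) \<partial>lborel)"
  using nn_affine[OF assms(1), of c 0] assms(2) by simp

lemma cs_chain:
  fixes f :: "'a::real_vector \<Rightarrow> real" and n :: nat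
  assumes "n \<ge> 1"
  shows "(f y - f x)^2 \<le> real (Suc n) * ((f z - f x)^2 +
     (\<Sum>j<n. (f (z + (real (Suc j) / real n) *\<^sub>R (y - z)) - f (z + (real j / real n) *\<^sub>R (y - z)))^2))"
proof -
  define g where "g j = f (z + (real j / real n) *\<^sub>R (y - z))" for j
  define b where "b i = (if i = 0 then f z - f x else g i - g (i - 1))" for i
  have "(\<Sum>j<n. g (Suc j) - g j) = g n - g 0" by (rule sum_lessThan_telescope)
  moreover have "g n = f y" "g 0 = f z" using assms by (auto simp: g_def)
  ultimately have "f y - f x = b 0 + (\<Sum>j<n. b (Suc j))" by (simp add: b_def)
  also have "\<dots> = (\<Sum>i<Suc n. b i)" by (simp only: sum.lessThan_Suc_shift)
  finally have e: "f y - f x = (\<Sum>i<Suc n. b i)" .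
  have "(\<Sum>i<Suc n. b i)^2 \<le> (\<Sum>i<Suc n. (b i)^2) * real (card {..<Suc n})"
    by (rule sum_squared_le_sum_of_squares)
  also have "(\<Sum>i<Suc n. (b i)^2) = (b 0)^2 + (\<Sum>j<n. (b (Suc j))^2)"
    by (simp only: sum.lessThan_Suc_shift)
  finally show ?thesis unfolding e by (simp add: b_def g_def mult.commute)
qed

lemma ex_dyadic:
  fixes t :: real assumes "t \<ge> 1"
  shows "\<exists>m::nat. 2^m \<le> t \<and> t < 2^Suc m"
proof -
  have "1 \<le> nat \<lfloor>t\<rfloor>" using assms by linarith
  from ex_power_ivl1[OF _ this, of 2] obtain m where m: "2^m \<le> nat \<lfloor>t\<rfloor>" "nat \<lfloor>t\<rfloor> < 2^(m+1)" by auto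
  have a: "real (2^m) \<le> real (nat \<lfloor>t\<rfloor>)" using m(1) by (simp only: of_nat_le_iff)
  have b: "real (nat \<lfloor>t\<rfloor>) \<le> t" using assms by linarith
  have c: "real (nat \<lfloor>t\<rfloor>) + 1 \<le> real (2^(m+1))" using m(2) by (simp only: of_nat_le_iff Suc_eq_plus1[symmetric] of_nat_Suc[symmetric] Suc_le_eq)
  have e: "t < real (nat \<lfloor>t\<rfloor>) + 1" using assms by linarith
  have p1: "real (2^m) = (2::real)^m" "real (2^(m+1)) = (2::real)^Suc m" by simp_all
  show ?thesis using a b c e unfolding p1 by (intro exI[of _ m]) linarith
qed

lemma tail_finite:
  assumes "h > 0"
  shows "(\<integral>\<^sup>+v. indicator {v::'a::euclidean_space. h \<le> norm v} v * ennreal (1 / norm v ^ (DIM('a) + 1)) \<partial>lborel) < \<infinity>"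
proof -
  define d where "d = DIM('a)"
  define u where "u = unit_ball_vol (real d)"
  define F where "F m v = indicator {v::'a. norm v < 2^Suc m * h} v * ennreal (1 / (2^m * h) ^ (d + 1))" for m v
  have pw: "indicator {v::'a. h \<le> norm v} v * ennreal (1 / norm v ^ (d + 1)) \<le> (\<Sum>m. F m v)" for v
  proof (cases "h \<le> norm v")
    case True
    then have "norm v / h \<ge> 1" using assms by simp
    from ex_dyadic[OF this] obtain m where m: "2^m \<le> norm v / h" "norm v / h < 2^Suc m" by blast
    have m1: "2^m * h \<le> norm v" "norm v < 2^Suc m * h" using m assms by (auto simp: field_simps)
    have "0 < 2^m * h" using assms by simp
    then have nv: "norm v > 0" using m1 by linarith
    have "1 / norm v ^ (d + 1) \<le> 1 / (2^m * h) ^ (d + 1)"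
      using m1 assms nv by (intro divide_left_mono power_mono mult_pos_pos) auto
    then have "indicator {v::'a. h \<le> norm v} v * ennreal (1 / norm v ^ (d + 1)) \<le> F m v"
      using True m1 by (auto simp: F_def indicator_def)
    also have "F m v \<le> sum (\<lambda>m. F m v) {..<Suc m}" by (simp add: sum.lessThan_Suc)
    also have "\<dots> \<le> (\<Sum>m. F m v)" by (rule sum_le_suminf) auto
    finally show ?thesis .
  qed (simp add: indicator_def)
  have "(\<integral>\<^sup>+v. indicator {v::'a. h \<le> norm v} v * ennreal (1 / norm v ^ (d + 1)) \<partial>lborel)
      \<le> (\<integral>\<^sup>+v. (\<Sum>m. F m v) \<partial>lborel)"
    by (intro nn_integral_mono pw)
  also have "\<dots> = (\<Sum>m. \<integral>\<^sup>+v. F m v \<partial>lborel)"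
    by (rule nn_integral_suminf) (simp add: F_def)
  also have "\<dots> = (\<Sum>m. ennreal (u * 2^d / h * (1/2)^m))"
  proof (intro suminf_cong)
    fix m :: nat
    have "(\<integral>\<^sup>+v. F m v \<partial>lborel) = emeasure lborel {v::'a. norm v < 2^Suc m * h} * ennreal (1 / (2^m * h) ^ (d + 1))"
      unfolding F_def by (subst nn_integral_multc) auto
    also have "{v::'a. norm v < 2^Suc m * h} = ball 0 (2^Suc m * h)" by (auto simp: ball_def)
    also have "emeasure lborel (ball (0::'a) (2^Suc m * h)) = ennreal (u * (2^Suc m * h)^d)"
      using assms by (subst emeasure_ball) (simp_all add: u_def d_def)
    also have "ennreal (u * (2^Suc m * h)^d) * ennreal (1 / (2^m * h) ^ (d + 1)) = ennreal (u * 2^d / h * (1/2)^m)"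
    proof -
      have "u * (2^Suc m * h)^d * (1 / (2^m * h) ^ (d + 1)) = u * 2^d / h * (1/2)^m"
        using assms by (simp add: power_mult_distrib field_simps power_add)
      then show ?thesis using assms by (simp add: ennreal_mult'[symmetric] u_def)
    qed
    finally show "(\<integral>\<^sup>+v. F m v \<partial>lborel) = ennreal (u * 2^d / h * (1/2)^m)" .
  qed
  also have "\<dots> < \<infinity>"
  proof -
    have "summable (\<lambda>m. u * 2^d / h * (1/2::real)^m)"
      by (intro summable_mult summable_geometric) auto
    moreover have "0 \<le> u * 2^d / h * (1/2::real)^m" for m using assms by (simp add: u_def)
    ultimately have "(\<Sum>m. ennreal (u * 2^d / h * (1/2)^m)) \<noteq> top"
      by (intro ennreal_suminf_neq_top)
    then show ?thesis by (simp add: less_top)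
  qed
  finally show ?thesis unfolding d_def .
qed



lemma outer_conv:
  fixes \<Phi> :: "'a::euclidean_space \<Rightarrow> ennreal"
  assumes [measurable]: "\<Phi> \<in> borel_measurable borel"
  shows "(\<integral>\<^sup>+x. (\<integral>\<^sup>+k. indicator {k. h \<le> norm k} k * ennreal (1 / norm k ^ (DIM('a)+1)) * \<Phi> (x + k) \<partial>lborel) \<partial>lborel)
       = (\<integral>\<^sup>+v. indicator {v::'a. h \<le> norm v} v * ennreal (1 / norm v ^ (DIM('a)+1)) \<partial>lborel) * (\<integral>\<^sup>+y. \<Phi> y \<partial>lborel)"
proof -
  define W where "W v = indicator {v::'a. h \<le> norm v} v * ennreal (1 / norm v ^ (DIM('a)+1))" for v
  have Wm[measurable]: "W \<in> borel_measurable borel" unfolding W_def by measurable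
  have "(\<integral>\<^sup>+x. (\<integral>\<^sup>+k. W k * \<Phi> (x + k) \<partial>lborel) \<partial>lborel) = (\<integral>\<^sup>+x. (\<integral>\<^sup>+y. W (y - x) * \<Phi> y \<partial>lborel) \<partial>lborel)"
  proof (rule nn_integral_cong)
    fix x :: 'a
    show "(\<integral>\<^sup>+k. W k * \<Phi> (x + k) \<partial>lborel) = (\<integral>\<^sup>+y. W (y - x) * \<Phi> y \<partial>lborel)"
      using nn_transl[of "\<lambda>y. W (y - x) * \<Phi> y" x] by simp
  qed
  also have "\<dots> = (\<integral>\<^sup>+y. (\<integral>\<^sup>+x. W (y - x) * \<Phi> y \<partial>lborel) \<partial>lborel)"
    using lborel_pair.Fubini[of "\<lambda>(x, y). W (y - x) * \<Phi> y"] by simp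
  also have "\<dots> = (\<integral>\<^sup>+y. (\<integral>\<^sup>+v. W v \<partial>lborel) * \<Phi> y \<partial>lborel)"
  proof (rule nn_integral_cong)
    fix y :: 'a
    have "(\<integral>\<^sup>+x. W (y - x) * \<Phi> y \<partial>lborel) = (\<integral>\<^sup>+x. W (y - x) \<partial>lborel) * \<Phi> y"
      by (rule nn_integral_multc) simp
    also have "(\<integral>\<^sup>+x. W (y - x) \<partial>lborel) = (\<integral>\<^sup>+v. W v \<partial>lborel)"
      by (rule nn_refl) simp
    finally show "(\<integral>\<^sup>+x. W (y - x) * \<Phi> y \<partial>lborel) = (\<integral>\<^sup>+v. W v \<partial>lborel) * \<Phi> y" .
  qed
  also have "\<dots> = (\<integral>\<^sup>+v. W v \<partial>lborel) * (\<integral>\<^sup>+y. \<Phi> y \<partial>lborel)"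
    by (rule nn_integral_cmult) simp
  finally show ?thesis unfolding W_def .
qed

lemma vec_id1: "(y::'a::real_vector) - v + s *\<^sub>R (y - (y - v)) = y + (s - 1) *\<^sub>R v"
  by (simp add: algebra_simps)

lemma phi_bound:
  fixes f :: "'a::euclidean_space \<Rightarrow> real" and \<sigma> :: "'a \<Rightarrow> ereal" and n :: nat
  assumes fm[measurable]: "f \<in> borel_measurable borel"
    and h: "h > 0" and n: "n \<ge> 1" and D: "D \<le> real n * h"
    and sig: "\<And>y. ereal h < \<sigma> y"
  shows "(\<integral>\<^sup>+y. (\<integral>\<^sup>+z. indicator {z. dist y z < D} z *
            ennreal ((f (z + (real (Suc j) / real n) *\<^sub>R (y - z)) - f (z + (real j / real n) *\<^sub>R (y - z)))\<^sup>2) \<partial>lborel) \<partial>lborel)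
      \<le> ennreal (real n ^ DIM('a) * h ^ (DIM('a) + 1)) * screened_sq \<sigma> f"
proof -
  define a where "a = real (Suc j) / real n - 1"
  define b where "b = real j / real n - 1"
  have ab: "a = b + 1 / real n" unfolding a_def b_def by (simp add: add_divide_distrib)
  define G where "G u = (\<integral>\<^sup>+y. ennreal ((f (y + u) - f y)\<^sup>2) \<partial>lborel)" for u :: 'a
  have Gm[measurable]: "G \<in> borel_measurable borel" unfolding G_def by measurable
  have G0: "G 0 = 0" by (simp add: G_def)
  define wt where "wt u = ennreal (1 / norm u ^ (DIM('a) + 1))" for u :: 'a
  have wtm[measurable]: "wt \<in> borel_measurable borel" unfolding wt_def by measurable
  have step1: "(\<integral>\<^sup>+z. indicator {z. dist y z < D} z *
            ennreal ((f (z + (real (Suc j) / real n) *\<^sub>R (y - z)) - f (z + (real j / real n) *\<^sub>R (y - z)))\<^sup>2) \<partial>lborel)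
     = (\<integral>\<^sup>+v. indicator {v. norm v < D} v * ennreal ((f (y + a *\<^sub>R v) - f (y + b *\<^sub>R v))\<^sup>2) \<partial>lborel)" for y
  proof -
    have "(\<integral>\<^sup>+z. indicator {z. dist y z < D} z *
            ennreal ((f (z + (real (Suc j) / real n) *\<^sub>R (y - z)) - f (z + (real j / real n) *\<^sub>R (y - z)))\<^sup>2) \<partial>lborel)
      = (\<integral>\<^sup>+v. indicator {z. dist y z < D} (y - v) *
            ennreal ((f ((y - v) + (real (Suc j) / real n) *\<^sub>R (y - (y - v))) - f ((y - v) + (real j / real n) *\<^sub>R (y - (y - v))))\<^sup>2) \<partial>lborel)"
      by (rule nn_refl[symmetric]) measurable
    also have "\<dots> = (\<integral>\<^sup>+v. indicator {v. norm v < D} v * ennreal ((f (y + a *\<^sub>R v) - f (y + b *\<^sub>R v))\<^sup>2) \<partial>lborel)"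
      unfolding vec_id1 a_def b_def by (intro nn_integral_cong) (simp add: dist_norm indicator_def)
    finally show ?thesis .
  qed
  have "(\<integral>\<^sup>+y. (\<integral>\<^sup>+v. indicator {v. norm v < D} v * ennreal ((f (y + a *\<^sub>R v) - f (y + b *\<^sub>R v))\<^sup>2) \<partial>lborel) \<partial>lborel)
     = (\<integral>\<^sup>+v. (\<integral>\<^sup>+y. indicator {v. norm v < D} v * ennreal ((f (y + a *\<^sub>R v) - f (y + b *\<^sub>R v))\<^sup>2) \<partial>lborel) \<partial>lborel)"
    using lborel_pair.Fubini[of "\<lambda>(v, y). indicator {v. norm v < D} v * ennreal ((f (y + a *\<^sub>R v) - f (y + b *\<^sub>R v))\<^sup>2)"]
    by simp
  also have "\<dots> = (\<integral>\<^sup>+v. indicator {v. norm v < D} v * G ((1 / real n) *\<^sub>R v) \<partial>lborel)"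
  proof (rule nn_integral_cong)
    fix v :: 'a
    have "(\<integral>\<^sup>+y. ennreal ((f (y + a *\<^sub>R v) - f (y + b *\<^sub>R v))\<^sup>2) \<partial>lborel)
        = (\<integral>\<^sup>+y. ennreal ((f ((b *\<^sub>R v + y) + (1 / real n) *\<^sub>R v) - f (b *\<^sub>R v + y))\<^sup>2) \<partial>lborel)"
      unfolding ab by (intro nn_integral_cong) (simp add: algebra_simps)
    also have "\<dots> = G ((1 / real n) *\<^sub>R v)" unfolding G_def
      by (rule nn_transl) measurable
    finally show "(\<integral>\<^sup>+y. indicator {v. norm v < D} v * ennreal ((f (y + a *\<^sub>R v) - f (y + b *\<^sub>R v))\<^sup>2) \<partial>lborel)
        = indicator {v. norm v < D} v * G ((1 / real n) *\<^sub>R v)"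
      by (subst nn_integral_cmult) auto
  qed
  also have "\<dots> = ennreal (real n ^ DIM('a)) * (\<integral>\<^sup>+u. indicator {v. norm v < D} (real n *\<^sub>R u) * G u \<partial>lborel)"
    using n by (subst nn_scale[of _ "real n"]) auto
  also have "\<dots> \<le> ennreal (real n ^ DIM('a)) * (\<integral>\<^sup>+u. ennreal (h ^ (DIM('a) + 1)) * (indicator {u. norm u < h} u * wt u * G u) \<partial>lborel)"
  proof (intro mult_left_mono nn_integral_mono)
    fix u :: 'a
    show "indicator {v. norm v < D} (real n *\<^sub>R u) * G u \<le> ennreal (h ^ (DIM('a) + 1)) * (indicator {u. norm u < h} u * wt u * G u)"
    proof (cases "u = 0 \<or> \<not> real n * norm u < D")
      case True then show ?thesis using G0 n by (auto simp: indicator_def)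
    next
      case False
      then have u0: "norm u > 0" and lt: "real n * norm u < D" by auto
      have "real n * norm u < real n * h" using lt D by linarith
      then have uh: "norm u < h" using n by simp
      have pm: "norm u ^ (DIM('a) + 1) \<le> h ^ (DIM('a) + 1)"
        by (rule power_mono) (use uh in auto)
      have pp: "norm u ^ (DIM('a) + 1) > 0" using u0 by simp
      have "1 \<le> h ^ (DIM('a) + 1) * (1 / norm u ^ (DIM('a) + 1))"
        using pm pp by (simp add: field_simps)
      then have "1 \<le> ennreal (h ^ (DIM('a) + 1)) * wt u"
        unfolding wt_def using h by (simp add: ennreal_mult'[symmetric])
      then have "G u \<le> ennreal (h ^ (DIM('a) + 1)) * wt u * G u"
        using mult_right_mono[of 1 "ennreal (h ^ (DIM('a) + 1)) * wt u" "G u"] by simp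
      then show ?thesis using lt uh n by (simp add: indicator_def mult.assoc)
    qed
  qed simp
  also have "\<dots> = ennreal (real n ^ DIM('a)) * (ennreal (h ^ (DIM('a) + 1)) * (\<integral>\<^sup>+u. indicator {u. norm u < h} u * wt u * G u \<partial>lborel))"
    by (subst nn_integral_cmult) auto
  also have "(\<integral>\<^sup>+u. indicator {u. norm u < h} u * wt u * G u \<partial>lborel)
      = (\<integral>\<^sup>+u. (\<integral>\<^sup>+y. indicator {u. norm u < h} u * wt u * ennreal ((f (y + u) - f y)\<^sup>2) \<partial>lborel) \<partial>lborel)"
    unfolding G_def by (rule nn_integral_cong) (subst nn_integral_cmult, auto)
  also have "\<dots> = (\<integral>\<^sup>+y. (\<integral>\<^sup>+u. indicator {u. norm u < h} u * wt u * ennreal ((f (y + u) - f y)\<^sup>2) \<partial>lborel) \<partial>lborel)"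
    using lborel_pair.Fubini[of "\<lambda>(y, u). indicator {u. norm u < h} u * wt u * ennreal ((f (y + u) - f y)\<^sup>2)"]
    by simp
  also have "\<dots> \<le> screened_sq \<sigma> f"
    unfolding screened_sq_def
  proof (intro nn_integral_mono)
    fix y u :: 'a
    have i: "indicator {u. norm u < h} u \<le> (indicator {k. ereal (norm k) < \<sigma> y} u :: ennreal)"
    proof (cases "norm u < h")
      case True
      then have "ereal (norm u) < ereal h" by simp
      then have "ereal (norm u) < \<sigma> y" using sig[of y] by (rule order.strict_trans)
      then show ?thesis by (simp add: indicator_def)
    qed (simp add: indicator_def)
    have "wt u * ennreal ((f (y + u) - f y)\<^sup>2) = ennreal ((f (y + u) - f y)\<^sup>2 / norm u ^ (DIM('a) + 1))"
      unfolding wt_def by (simp add: ennreal_mult'[symmetric] divide_inverse mult.commute)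
    then show "indicator {u. norm u < h} u * wt u * ennreal ((f (y + u) - f y)\<^sup>2)
        \<le> indicator {k. ereal (norm k) < \<sigma> y} u * ennreal ((f (y + u) - f y)\<^sup>2 / norm u ^ (DIM('a) + 1))"
      using i by (simp add: mult.assoc mult_right_mono)
  qed
  finally have fin: "(\<integral>\<^sup>+y. (\<integral>\<^sup>+v. indicator {v. norm v < D} v * ennreal ((f (y + a *\<^sub>R v) - f (y + b *\<^sub>R v))\<^sup>2) \<partial>lborel) \<partial>lborel)
      \<le> ennreal (real n ^ DIM('a)) * (ennreal (h ^ (DIM('a) + 1)) * screened_sq \<sigma> f)"
    by (simp add: mult_left_mono)
  show ?thesis unfolding step1 using fin h by (simp add: ennreal_mult' mult.assoc)
qed



definition Phi :: "('a::euclidean_space \<Rightarrow> real) \<Rightarrow> real \<Rightarrow> nat \<Rightarrow> nat \<Rightarrow> 'a \<Rightarrow> ennreal" where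
  "Phi f D n j y = (\<integral>\<^sup>+z. indicator {z. dist y z < D} z *
     ennreal ((f (z + (real (Suc j) / real n) *\<^sub>R (y - z)) - f (z + (real j / real n) *\<^sub>R (y - z)))\<^sup>2) \<partial>lborel)"

lemma Phi_meas[measurable]:
  assumes [measurable]: "f \<in> borel_measurable borel"
  shows "Phi f D n j \<in> borel_measurable borel"
  unfolding Phi_def by measurable

lemma Qsplit: "ennreal (a\<^sup>2 / norm k ^ m) = ennreal (a\<^sup>2) * ennreal (1 / norm k ^ m)"
  by (simp add: ennreal_mult'[symmetric] divide_inverse)

lemma pw_chain:
  fixes f :: "'a::euclidean_space \<Rightarrow> real" and n :: nat
  assumes fm[measurable]: "f \<in> borel_measurable borel" and h: "h > 0" and n: "n \<ge> 1"
   and D: "D \<ge> M + 2*h" and rh: "r > h" and k1: "r \<le> norm k" and k2: "norm k < r + M"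
  shows "emeasure lborel (ball (0::'a) h) * (ennreal ((f (x + k) - f x)\<^sup>2) * ennreal (1 / norm k ^ (DIM('a)+1)))
   \<le> ennreal (real (Suc n)) * (ennreal (1 / norm k ^ (DIM('a)+1)) *
        (\<integral>\<^sup>+z. indicator {z. dist x z < r} z * indicator {z. dist (x + k) z < D} z * ennreal ((f z - f x)\<^sup>2) \<partial>lborel)
      + (\<Sum>j<n. ennreal (1 / norm k ^ (DIM('a)+1)) * Phi f D n j (x + k)))"
proof -
  define wt where "wt = ennreal (1 / norm k ^ (DIM('a)+1))"
  define I1 where "I1 z = (indicator {z. dist x z < r} z :: ennreal)" for z
  define I2 where "I2 z = (indicator {z. dist (x + k) z < D} z :: ennreal)" for z
  define T where "T j z = (f (z + (real (Suc j) / real n) *\<^sub>R (x + k - z)) - f (z + (real j / real n) *\<^sub>R (x + k - z)))\<^sup>2" for j z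
  have I1m[measurable]: "I1 \<in> borel_measurable borel" unfolding I1_def by measurable
  have I2m[measurable]: "I2 \<in> borel_measurable borel" unfolding I2_def by measurable
  have Tm[measurable]: "(\<lambda>z. T j z) \<in> borel_measurable borel" for j unfolding T_def by measurable
  have nk: "norm k > 0" using k1 rh h by linarith
  define p where "p = x + ((r - h) / norm k) *\<^sub>R k"
  have dxp: "dist x p = r - h" using nk rh by (simp add: p_def dist_norm)
  have lam: "(r - h) / norm k \<le> 1" using k1 nk rh h by (simp add: field_simps)
  have e: "x + k - p = (1 - (r - h) / norm k) *\<^sub>R k" by (simp add: p_def algebra_simps)
  have "dist (x + k) p = norm (x + k - p)" by (simp add: dist_norm)
  also have "\<dots> = \<bar>1 - (r - h) / norm k\<bar> * norm k" unfolding e by simp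
  also have "\<dots> = (1 - (r - h) / norm k) * norm k" using lam by simp
  also have "\<dots> = norm k - (r - h)" using nk by (simp add: field_simps)
  finally have dkp: "dist (x + k) p = norm k - (r - h)" .
  have sub: "indicator (ball p h) z \<le> I1 z * I2 z" for z
  proof (cases "z \<in> ball p h")
    case True
    then have "dist p z < h" by simp
    then have "dist x z < r" "dist (x + k) z < D"
      using dxp dkp dist_triangle[of x z p] dist_triangle[of "x + k" z p] k2 D by linarith+
    then show ?thesis using True by (simp add: I1_def I2_def)
  qed simp
  have c_eq: "emeasure lborel (ball (0::'a) h) = emeasure lborel (ball p h)"
    using h by (simp add: emeasure_ball)
  also have "\<dots> = (\<integral>\<^sup>+z. indicator (ball p h) z \<partial>lborel)" by simp
  also have "\<dots> \<le> (\<integral>\<^sup>+z. I1 z * I2 z \<partial>lborel)" by (intro nn_integral_mono sub)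
  finally have c_le: "emeasure lborel (ball (0::'a) h) \<le> (\<integral>\<^sup>+z. I1 z * I2 z \<partial>lborel)" .
  have cs: "(f (x + k) - f x)\<^sup>2 \<le> real (Suc n) * ((f z - f x)\<^sup>2 + (\<Sum>j<n. T j z))" for z
    unfolding T_def by (rule cs_chain[OF n])
  have "emeasure lborel (ball (0::'a) h) * (ennreal ((f (x + k) - f x)\<^sup>2) * wt)
      \<le> (\<integral>\<^sup>+z. I1 z * I2 z \<partial>lborel) * (ennreal ((f (x + k) - f x)\<^sup>2) * wt)"
    by (intro mult_right_mono c_le) simp
  also have "\<dots> = (\<integral>\<^sup>+z. I1 z * I2 z * (ennreal ((f (x + k) - f x)\<^sup>2) * wt) \<partial>lborel)"
    by (rule nn_integral_multc[symmetric]) simp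
  also have "\<dots> \<le> (\<integral>\<^sup>+z. ennreal (real (Suc n)) * (wt * (I1 z * I2 z * ennreal ((f z - f x)\<^sup>2))
        + (\<Sum>j<n. wt * (I2 z * ennreal (T j z)))) \<partial>lborel)"
  proof (rule nn_integral_mono)
    fix z :: 'a
    show "I1 z * I2 z * (ennreal ((f (x + k) - f x)\<^sup>2) * wt) \<le> ennreal (real (Suc n)) * (wt * (I1 z * I2 z * ennreal ((f z - f x)\<^sup>2))
        + (\<Sum>j<n. wt * (I2 z * ennreal (T j z))))"
    proof (cases "I1 z = 1 \<and> I2 z = 1")
      case True
      have Tnn: "\<And>j. 0 \<le> T j z" unfolding T_def by simp
      have "ennreal ((f (x + k) - f x)\<^sup>2) \<le> ennreal (real (Suc n) * ((f z - f x)\<^sup>2 + (\<Sum>j<n. T j z)))"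
        using cs[of z] by (rule ennreal_leI)
      also have "\<dots> = ennreal (real (Suc n)) * (ennreal ((f z - f x)\<^sup>2) + (\<Sum>j<n. ennreal (T j z)))"
        using Tnn by (simp add: ennreal_mult' ennreal_plus sum_nonneg sum_ennreal)
      finally have "ennreal ((f (x + k) - f x)\<^sup>2) * wt \<le> ennreal (real (Suc n)) * (ennreal ((f z - f x)\<^sup>2) + (\<Sum>j<n. ennreal (T j z))) * wt"
        by (rule mult_right_mono) simp
      also have "\<dots> = ennreal (real (Suc n)) * (wt * ennreal ((f z - f x)\<^sup>2) + (\<Sum>j<n. wt * ennreal (T j z)))"
        by (simp add: algebra_simps sum_distrib_left sum_distrib_right)
      finally show ?thesis using True by simp
    next
      case False
      then have "I1 z * I2 z = 0" unfolding I1_def I2_def by (auto simp: indicator_def)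
      then show ?thesis by (metis mult_zero_left zero_le)
    qed
  qed
  also have "\<dots> = ennreal (real (Suc n)) * (wt * (\<integral>\<^sup>+z. I1 z * I2 z * ennreal ((f z - f x)\<^sup>2) \<partial>lborel)
        + (\<Sum>j<n. wt * (\<integral>\<^sup>+z. I2 z * ennreal (T j z) \<partial>lborel)))"
    by (simp add: nn_integral_cmult nn_integral_add nn_integral_sum)
  also have "(\<lambda>j. (\<integral>\<^sup>+z. I2 z * ennreal (T j z) \<partial>lborel)) = (\<lambda>j. Phi f D n j (x + k))"
    unfolding Phi_def I2_def T_def by simp
  finally show ?thesis unfolding wt_def I1_def I2_def by (simp add: mult.assoc)
qed



lemma Qsplit2: "ennreal (a\<^sup>2 / b) = ennreal (a\<^sup>2) * ennreal (1 / b)"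
  by (simp add: ennreal_mult'[symmetric])

lemma T0bound:
  fixes f :: "'a::euclidean_space \<Rightarrow> real"
  assumes fm[measurable]: "f \<in> borel_measurable borel" and D: "D > 0" and r: "r > 0"
  shows "(\<integral>\<^sup>+k. indicator {k. r \<le> norm k \<and> norm k < r + M} k * ennreal (1 / norm k ^ (DIM('a)+1)) *
            (\<integral>\<^sup>+z. indicator {z. dist x z < r} z * indicator {z. dist (x + k) z < D} z * ennreal ((f z - f x)\<^sup>2) \<partial>lborel) \<partial>lborel)
     \<le> emeasure lborel (ball (0::'a) D) * (\<integral>\<^sup>+k. indicator {k. norm k < r} k * ennreal ((f (x + k) - f x)\<^sup>2 / norm k ^ (DIM('a)+1)) \<partial>lborel)"
proof -
  define V where "V = emeasure lborel (ball (0::'a) D)"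
  define cr where "cr = ennreal (1 / r ^ (DIM('a)+1))"
  define I1 where "I1 z = (indicator {z. dist x z < r} z :: ennreal)" for z
  have I1m[measurable]: "I1 \<in> borel_measurable borel" unfolding I1_def by measurable
  define I0 where "I0 k = (\<integral>\<^sup>+z. I1 z * indicator {z. dist (x + k) z < D} z * ennreal ((f z - f x)\<^sup>2) \<partial>lborel)" for k
  have I0m[measurable]: "I0 \<in> borel_measurable borel" unfolding I0_def by measurable
  have "(\<integral>\<^sup>+k. indicator {k. r \<le> norm k \<and> norm k < r + M} k * ennreal (1 / norm k ^ (DIM('a)+1)) * I0 k \<partial>lborel)
      \<le> (\<integral>\<^sup>+k. cr * I0 k \<partial>lborel)"
  proof (rule nn_integral_mono)
    fix k :: 'a
    show "indicator {k. r \<le> norm k \<and> norm k < r + M} k * ennreal (1 / norm k ^ (DIM('a)+1)) * I0 k \<le> cr * I0 k"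
    proof (cases "r \<le> norm k \<and> norm k < r + M")
      case True
      then have "norm k > 0" using r by linarith
      then have "1 / norm k ^ (DIM('a)+1) \<le> 1 / r ^ (DIM('a)+1)"
        using r True by (intro divide_left_mono power_mono mult_pos_pos) auto
      then show ?thesis using True unfolding cr_def
        by (intro mult_right_mono) (auto simp: indicator_def intro: ennreal_leI)
    next
      case False
      then have "indicator {k. r \<le> norm k \<and> norm k < r + M} k = (0::ennreal)" by (simp add: indicator_def)
      then show ?thesis by simp
    qed
  qed
  also have "\<dots> = cr * (\<integral>\<^sup>+k. I0 k \<partial>lborel)" by (rule nn_integral_cmult) simp
  also have "(\<integral>\<^sup>+k. I0 k \<partial>lborel) = (\<integral>\<^sup>+z. (\<integral>\<^sup>+k. I1 z * indicator {z. dist (x + k) z < D} z * ennreal ((f z - f x)\<^sup>2) \<partial>lborel) \<partial>lborel)"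
    unfolding I0_def
    using lborel_pair.Fubini[of "\<lambda>(k, z). I1 z * indicator {z. dist (x + k) z < D} z * ennreal ((f z - f x)\<^sup>2)"]
    by simp
  also have "\<dots> = (\<integral>\<^sup>+z. V * (I1 z * ennreal ((f z - f x)\<^sup>2)) \<partial>lborel)"
  proof (rule nn_integral_cong)
    fix z :: 'a
    have e: "indicator {z. dist (x + k) z < D} z = (indicator (ball (z - x) D) k :: ennreal)" for k
    proof -
      have "dist (x + k) z = dist (z - x) k"
        by (simp add: dist_norm) (metis add_diff_cancel_left' diff_diff_add norm_minus_commute)
      then show ?thesis by (simp add: indicator_def)
    qed
    have "(\<integral>\<^sup>+k. I1 z * indicator {z. dist (x + k) z < D} z * ennreal ((f z - f x)\<^sup>2) \<partial>lborel)
        = (\<integral>\<^sup>+k. indicator (ball (z - x) D) k * (I1 z * ennreal ((f z - f x)\<^sup>2)) \<partial>lborel)"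
      unfolding e by (rule nn_integral_cong) (simp add: mult_ac)
    also have "\<dots> = emeasure lborel (ball (z - x) D) * (I1 z * ennreal ((f z - f x)\<^sup>2))"
      by (subst nn_integral_multc) (auto intro: borel_measurable_indicator)
    also have "emeasure lborel (ball (z - x) D) = V"
      unfolding V_def using D by (simp add: emeasure_ball)
    finally show "(\<integral>\<^sup>+k. I1 z * indicator {z. dist (x + k) z < D} z * ennreal ((f z - f x)\<^sup>2) \<partial>lborel)
        = V * (I1 z * ennreal ((f z - f x)\<^sup>2))" .
  qed
  also have "\<dots> = V * (\<integral>\<^sup>+z. I1 z * ennreal ((f z - f x)\<^sup>2) \<partial>lborel)"
    by (rule nn_integral_cmult) simp
  finally have st1: "(\<integral>\<^sup>+k. indicator {k. r \<le> norm k \<and> norm k < r + M} k * ennreal (1 / norm k ^ (DIM('a)+1)) * I0 k \<partial>lborel)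
      \<le> V * (\<integral>\<^sup>+z. cr * (I1 z * ennreal ((f z - f x)\<^sup>2)) \<partial>lborel)"
    by (simp add: nn_integral_cmult mult_ac)
  have "(\<integral>\<^sup>+z. cr * (I1 z * ennreal ((f z - f x)\<^sup>2)) \<partial>lborel)
     \<le> (\<integral>\<^sup>+z. I1 z * ennreal ((f z - f x)\<^sup>2) * ennreal (1 / norm (z - x) ^ (DIM('a)+1)) \<partial>lborel)"
  proof (rule nn_integral_mono_AE)
    show "AE z in lborel. cr * (I1 z * ennreal ((f z - f x)\<^sup>2))
        \<le> I1 z * ennreal ((f z - f x)\<^sup>2) * ennreal (1 / norm (z - x) ^ (DIM('a)+1))"
      using AE_lborel_singleton[of x]
    proof (rule AE_mp, intro AE_I2 impI)
      fix z :: 'a assume zx: "z \<noteq> x"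
      show "cr * (I1 z * ennreal ((f z - f x)\<^sup>2))
        \<le> I1 z * ennreal ((f z - f x)\<^sup>2) * ennreal (1 / norm (z - x) ^ (DIM('a)+1))"
      proof (cases "dist x z < r")
        case True
        have np: "norm (z - x) > 0" using zx by simp
        have "norm (z - x) < r" using True by (simp add: dist_norm norm_minus_commute)
        then have "1 / r ^ (DIM('a)+1) \<le> 1 / norm (z - x) ^ (DIM('a)+1)"
          using np r by (intro divide_left_mono power_mono mult_pos_pos) auto
        then have "cr \<le> ennreal (1 / norm (z - x) ^ (DIM('a)+1))" unfolding cr_def by (rule ennreal_leI)
        then have "cr * (I1 z * ennreal ((f z - f x)\<^sup>2)) \<le> ennreal (1 / norm (z - x) ^ (DIM('a)+1)) * (I1 z * ennreal ((f z - f x)\<^sup>2))"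
          by (rule mult_right_mono) simp
        then show ?thesis by (simp only: mult.commute)
      qed (simp add: I1_def)
    qed
  qed
  also have "\<dots> = (\<integral>\<^sup>+k. I1 (x + k) * ennreal ((f (x + k) - f x)\<^sup>2) * ennreal (1 / norm (x + k - x) ^ (DIM('a)+1)) \<partial>lborel)"
    by (rule nn_transl[symmetric]) measurable
  also have "\<dots> = (\<integral>\<^sup>+k. indicator {k. norm k < r} k * ennreal ((f (x + k) - f x)\<^sup>2 / norm k ^ (DIM('a)+1)) \<partial>lborel)"
    by (rule nn_integral_cong) (simp add: I1_def Qsplit2 indicator_def dist_norm)
  finally have st2: "(\<integral>\<^sup>+z. cr * (I1 z * ennreal ((f z - f x)\<^sup>2)) \<partial>lborel)
      \<le> (\<integral>\<^sup>+k. indicator {k. norm k < r} k * ennreal ((f (x + k) - f x)\<^sup>2 / norm k ^ (DIM('a)+1)) \<partial>lborel)" .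
  from st1 st2 show ?thesis unfolding I0_def I1_def V_def
    by (meson mult_left_mono order_trans zero_le)
qed



lemma perx:
  fixes f :: "'a::euclidean_space \<Rightarrow> real" and n :: nat
  assumes fm[measurable]: "f \<in> borel_measurable borel" and h: "h > 0" and n: "n \<ge> 1"
   and D: "D \<ge> M + 2*h" "D > 0" and rh: "r > h"
  shows "emeasure lborel (ball (0::'a) h) * (\<integral>\<^sup>+k. indicator {k. r \<le> norm k \<and> norm k < r + M} k * ennreal ((f (x + k) - f x)\<^sup>2 / norm k ^ (DIM('a)+1)) \<partial>lborel)
   \<le> ennreal (real (Suc n)) * (emeasure lborel (ball (0::'a) D) * (\<integral>\<^sup>+k. indicator {k. norm k < r} k * ennreal ((f (x + k) - f x)\<^sup>2 / norm k ^ (DIM('a)+1)) \<partial>lborel)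
       + (\<Sum>j<n. \<integral>\<^sup>+k. indicator {k. h \<le> norm k} k * ennreal (1 / norm k ^ (DIM('a)+1)) * Phi f D n j (x + k) \<partial>lborel))"
proof -
  define c where "c = emeasure lborel (ball (0::'a) h)"
  define wt where "wt k = ennreal (1 / norm k ^ (DIM('a)+1))" for k :: 'a
  define I0 where "I0 k = (\<integral>\<^sup>+z. indicator {z. dist x z < r} z * indicator {z. dist (x + k) z < D} z * ennreal ((f z - f x)\<^sup>2) \<partial>lborel)" for k
  have I0m[measurable]: "I0 \<in> borel_measurable borel" unfolding I0_def by measurable
  have wtm[measurable]: "wt \<in> borel_measurable borel" unfolding wt_def by measurable
  define IA where "IA k = (indicator {k::'a. r \<le> norm k \<and> norm k < r + M} k :: ennreal)" for k
  define IH where "IH k = (indicator {k::'a. h \<le> norm k} k :: ennreal)" for k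
  have IAm[measurable]: "IA \<in> borel_measurable borel" unfolding IA_def by measurable
  have IHm[measurable]: "IH \<in> borel_measurable borel" unfolding IH_def by measurable
  have "c * (\<integral>\<^sup>+k. IA k * ennreal ((f (x + k) - f x)\<^sup>2 / norm k ^ (DIM('a)+1)) \<partial>lborel)
      = (\<integral>\<^sup>+k. c * (IA k * ennreal ((f (x + k) - f x)\<^sup>2 / norm k ^ (DIM('a)+1))) \<partial>lborel)"
    by (rule nn_integral_cmult[symmetric]) measurable
  also have "\<dots> \<le> (\<integral>\<^sup>+k. ennreal (real (Suc n)) * (IA k * wt k * I0 k + (\<Sum>j<n. IH k * wt k * Phi f D n j (x + k))) \<partial>lborel)"
  proof (rule nn_integral_mono)
    fix k :: 'a
    show "c * (IA k * ennreal ((f (x + k) - f x)\<^sup>2 / norm k ^ (DIM('a)+1)))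
        \<le> ennreal (real (Suc n)) * (IA k * wt k * I0 k + (\<Sum>j<n. IH k * wt k * Phi f D n j (x + k)))"
    proof (cases "r \<le> norm k \<and> norm k < r + M")
      case True
      then have k1: "r \<le> norm k" and k2: "norm k < r + M" by auto
      have IA1: "IA k = 1" using True by (simp add: IA_def)
      have IH1: "IH k = 1" using k1 rh by (simp add: IH_def)
      have "c * (IA k * ennreal ((f (x + k) - f x)\<^sup>2 / norm k ^ (DIM('a)+1)))
          = c * (ennreal ((f (x + k) - f x)\<^sup>2) * wt k)"
        unfolding IA1 wt_def by (simp only: Qsplit2 mult_1)
      also have "\<dots> \<le> ennreal (real (Suc n)) * (wt k * I0 k + (\<Sum>j<n. wt k * Phi f D n j (x + k)))"
        unfolding c_def wt_def I0_def by (rule pw_chain[OF fm h n D(1) rh k1 k2])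
      also have "\<dots> = ennreal (real (Suc n)) * (IA k * wt k * I0 k + (\<Sum>j<n. IH k * wt k * Phi f D n j (x + k)))"
        unfolding IA1 IH1 by simp
      finally show ?thesis .
    next
      case False
      then have "IA k = 0" by (simp add: IA_def)
      then show ?thesis by simp
    qed
  qed
  also have "\<dots> = ennreal (real (Suc n)) * ((\<integral>\<^sup>+k. IA k * wt k * I0 k \<partial>lborel)
        + (\<Sum>j<n. \<integral>\<^sup>+k. IH k * wt k * Phi f D n j (x + k) \<partial>lborel))"
    by (simp add: nn_integral_cmult nn_integral_add nn_integral_sum)
  also have "\<dots> \<le> ennreal (real (Suc n)) * (emeasure lborel (ball (0::'a) D) * (\<integral>\<^sup>+k. indicator {k. norm k < r} k * ennreal ((f (x + k) - f x)\<^sup>2 / norm k ^ (DIM('a)+1)) \<partial>lborel)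
        + (\<Sum>j<n. \<integral>\<^sup>+k. IH k * wt k * Phi f D n j (x + k) \<partial>lborel))"
  proof (intro mult_left_mono add_right_mono)
    show "(\<integral>\<^sup>+k. IA k * wt k * I0 k \<partial>lborel) \<le> emeasure lborel (ball (0::'a) D) * (\<integral>\<^sup>+k. indicator {k. norm k < r} k * ennreal ((f (x + k) - f x)\<^sup>2 / norm k ^ (DIM('a)+1)) \<partial>lborel)"
      unfolding IA_def wt_def I0_def using T0bound[OF fm D(2), of r M x] rh h by simp
  qed simp
  finally show ?thesis unfolding c_def IA_def IH_def wt_def .
qed



lemma lsc_meas: "lsc_ereal (\<sigma>::'a::euclidean_space \<Rightarrow> ereal) \<Longrightarrow> \<sigma> \<in> borel_measurable borel"
  unfolding lsc_ereal_def by (intro borel_measurableI_greater) auto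

lemma key_bound:
  fixes f :: "'a::euclidean_space \<Rightarrow> real" and \<sigma>1 \<sigma>2 :: "'a \<Rightarrow> ereal" and n :: nat
  assumes fm[measurable]: "f \<in> borel_measurable borel"
    and s1m[measurable]: "\<sigma>1 \<in> borel_measurable borel" and s2m[measurable]: "\<sigma>2 \<in> borel_measurable borel"
    and h: "h > 0" and n: "n \<ge> 1" and D: "D \<ge> M + 2*h" "D > 0" "D \<le> real n * h"
    and sig: "\<And>y. ereal h < \<sigma>2 y"
    and ae: "AE x in lborel. \<sigma>1 x \<le> \<sigma>2 x + ereal M"
  shows "screened_sq \<sigma>1 f \<le> screened_sq \<sigma>2 f +
     (\<integral>\<^sup>+x. (\<integral>\<^sup>+k. indicator {k. \<sigma>2 x \<le> ereal (norm k) \<and> ereal (norm k) < \<sigma>2 x + ereal M} k *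
        ennreal ((f (x + k) - f x)\<^sup>2 / norm k ^ (DIM('a) + 1)) \<partial>lborel) \<partial>lborel)"
    and "emeasure lborel (ball (0::'a) h) *
     (\<integral>\<^sup>+x. (\<integral>\<^sup>+k. indicator {k. \<sigma>2 x \<le> ereal (norm k) \<and> ereal (norm k) < \<sigma>2 x + ereal M} k *
        ennreal ((f (x + k) - f x)\<^sup>2 / norm k ^ (DIM('a) + 1)) \<partial>lborel) \<partial>lborel)
     \<le> ennreal (real (Suc n)) * (emeasure lborel (ball (0::'a) D) +
         of_nat n * ((\<integral>\<^sup>+v. indicator {v::'a. h \<le> norm v} v * ennreal (1 / norm v ^ (DIM('a)+1)) \<partial>lborel)
           * ennreal (real n ^ DIM('a) * h ^ (DIM('a) + 1)))) * screened_sq \<sigma>2 f"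
proof -
  define Q where "Q x k = ennreal ((f (x + k) - f x)\<^sup>2 / norm k ^ (DIM('a) + 1))" for x k :: 'a
  have Qm[measurable]: "(\<lambda>(x, k). Q x k) \<in> borel_measurable (borel \<Otimes>\<^sub>M borel)" unfolding Q_def by measurable
  define E where "E x = (\<integral>\<^sup>+k. indicator {k. \<sigma>2 x \<le> ereal (norm k) \<and> ereal (norm k) < \<sigma>2 x + ereal M} k * Q x k \<partial>lborel)" for x
  have Em[measurable]: "E \<in> borel_measurable borel" unfolding E_def Q_def by measurable
  have S2eq: "screened_sq \<sigma>2 f = (\<integral>\<^sup>+x. (\<integral>\<^sup>+k. indicator {k. ereal (norm k) < \<sigma>2 x} k * Q x k \<partial>lborel) \<partial>lborel)"
    unfolding screened_sq_def Q_def ..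
  have "screened_sq \<sigma>1 f = (\<integral>\<^sup>+x. (\<integral>\<^sup>+k. indicator {k. ereal (norm k) < \<sigma>1 x} k * Q x k \<partial>lborel) \<partial>lborel)"
    unfolding screened_sq_def Q_def ..
  also have "\<dots> \<le> (\<integral>\<^sup>+x. (\<integral>\<^sup>+k. indicator {k. ereal (norm k) < \<sigma>2 x} k * Q x k \<partial>lborel) + E x \<partial>lborel)"
  proof (rule nn_integral_mono_AE)
    show "AE x in lborel. (\<integral>\<^sup>+k. indicator {k. ereal (norm k) < \<sigma>1 x} k * Q x k \<partial>lborel)
        \<le> (\<integral>\<^sup>+k. indicator {k. ereal (norm k) < \<sigma>2 x} k * Q x k \<partial>lborel) + E x"
      using ae
    proof (rule AE_mp, intro AE_I2 impI)
      fix x :: 'a assume x: "\<sigma>1 x \<le> \<sigma>2 x + ereal M"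
      have "(\<integral>\<^sup>+k. indicator {k. ereal (norm k) < \<sigma>1 x} k * Q x k \<partial>lborel)
          \<le> (\<integral>\<^sup>+k. indicator {k. ereal (norm k) < \<sigma>2 x} k * Q x k +
               indicator {k. \<sigma>2 x \<le> ereal (norm k) \<and> ereal (norm k) < \<sigma>2 x + ereal M} k * Q x k \<partial>lborel)"
      proof (rule nn_integral_mono)
        fix k :: 'a
        show "indicator {k. ereal (norm k) < \<sigma>1 x} k * Q x k
          \<le> indicator {k. ereal (norm k) < \<sigma>2 x} k * Q x k +
               indicator {k. \<sigma>2 x \<le> ereal (norm k) \<and> ereal (norm k) < \<sigma>2 x + ereal M} k * Q x k"
        proof (cases "ereal (norm k) < \<sigma>1 x")
          case True
          show ?thesis
          proof (cases "ereal (norm k) < \<sigma>2 x")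
            case False
            then have "\<sigma>2 x \<le> ereal (norm k) \<and> ereal (norm k) < \<sigma>2 x + ereal M"
              using True x by (auto simp: not_less)
            then show ?thesis using True by (simp add: indicator_def)
          qed (simp add: indicator_def)
        qed (simp add: indicator_def)
      qed
      also have "\<dots> = (\<integral>\<^sup>+k. indicator {k. ereal (norm k) < \<sigma>2 x} k * Q x k \<partial>lborel) + E x"
        unfolding E_def by (rule nn_integral_add) (simp_all add: Q_def)
      finally show "(\<integral>\<^sup>+k. indicator {k. ereal (norm k) < \<sigma>1 x} k * Q x k \<partial>lborel)
        \<le> (\<integral>\<^sup>+k. indicator {k. ereal (norm k) < \<sigma>2 x} k * Q x k \<partial>lborel) + E x" .
    qed
  qed
  also have "\<dots> = screened_sq \<sigma>2 f + (\<integral>\<^sup>+x. E x \<partial>lborel)"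
    unfolding S2eq by (rule nn_integral_add) (simp_all add: Q_def)
  finally show "screened_sq \<sigma>1 f \<le> screened_sq \<sigma>2 f +
     (\<integral>\<^sup>+x. (\<integral>\<^sup>+k. indicator {k. \<sigma>2 x \<le> ereal (norm k) \<and> ereal (norm k) < \<sigma>2 x + ereal M} k *
        ennreal ((f (x + k) - f x)\<^sup>2 / norm k ^ (DIM('a) + 1)) \<partial>lborel) \<partial>lborel)"
    unfolding E_def Q_def .

  define V where "V = emeasure lborel (ball (0::'a) D)"
  define Wh where "Wh = (\<integral>\<^sup>+v. indicator {v::'a. h \<le> norm v} v * ennreal (1 / norm v ^ (DIM('a)+1)) \<partial>lborel)"
  define Ps where "Ps j x = (\<integral>\<^sup>+k. indicator {k. h \<le> norm k} k * ennreal (1 / norm k ^ (DIM('a)+1)) * Phi f D n j (x + k) \<partial>lborel)" for j x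
  have Psm[measurable]: "Ps j \<in> borel_measurable borel" for j unfolding Ps_def by measurable
  have "emeasure lborel (ball (0::'a) h) * (\<integral>\<^sup>+x. E x \<partial>lborel) = (\<integral>\<^sup>+x. emeasure lborel (ball (0::'a) h) * E x \<partial>lborel)"
    by (rule nn_integral_cmult[symmetric]) simp
  also have "\<dots> \<le> (\<integral>\<^sup>+x. ennreal (real (Suc n)) * (V * (\<integral>\<^sup>+k. indicator {k. ereal (norm k) < \<sigma>2 x} k * Q x k \<partial>lborel) + (\<Sum>j<n. Ps j x)) \<partial>lborel)"
  proof (rule nn_integral_mono)
    fix x :: 'a
    show "emeasure lborel (ball (0::'a) h) * E x \<le> ennreal (real (Suc n)) * (V * (\<integral>\<^sup>+k. indicator {k. ereal (norm k) < \<sigma>2 x} k * Q x k \<partial>lborel) + (\<Sum>j<n. Ps j x))"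
    proof (cases "\<sigma>2 x")
      case (real r)
      have rh: "r > h" using sig[of x] real by simp
      have e1: "E x = (\<integral>\<^sup>+k. indicator {k. r \<le> norm k \<and> norm k < r + M} k * ennreal ((f (x + k) - f x)\<^sup>2 / norm k ^ (DIM('a)+1)) \<partial>lborel)"
        unfolding E_def Q_def real by (rule nn_integral_cong) (simp add: indicator_def)
      have e2: "(\<integral>\<^sup>+k. indicator {k. ereal (norm k) < \<sigma>2 x} k * Q x k \<partial>lborel)
          = (\<integral>\<^sup>+k. indicator {k. norm k < r} k * ennreal ((f (x + k) - f x)\<^sup>2 / norm k ^ (DIM('a)+1)) \<partial>lborel)"
        unfolding Q_def real by (rule nn_integral_cong) (simp add: indicator_def)
      show ?thesis unfolding e1 e2 V_def Ps_def
        by (rule perx[OF fm h n D(1) D(2) rh])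
    next
      case PInf
      then have "E x = 0" unfolding E_def by (simp add: indicator_def)
      then show ?thesis by simp
    next
      case MInf
      then show ?thesis using sig[of x] by simp
    qed
  qed
  also have "\<dots> = ennreal (real (Suc n)) * (V * screened_sq \<sigma>2 f + (\<Sum>j<n. \<integral>\<^sup>+x. Ps j x \<partial>lborel))"
    unfolding S2eq by (simp add: nn_integral_cmult nn_integral_add nn_integral_sum Q_def)
  also have "(\<lambda>j. \<integral>\<^sup>+x. Ps j x \<partial>lborel) = (\<lambda>j. Wh * (\<integral>\<^sup>+y. Phi f D n j y \<partial>lborel))"
    unfolding Ps_def Wh_def by (intro ext outer_conv) measurable
  also have "ennreal (real (Suc n)) * (V * screened_sq \<sigma>2 f + (\<Sum>j<n. Wh * (\<integral>\<^sup>+y. Phi f D n j y \<partial>lborel)))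
     \<le> ennreal (real (Suc n)) * (V * screened_sq \<sigma>2 f + (\<Sum>j<n. Wh * (ennreal (real n ^ DIM('a) * h ^ (DIM('a) + 1)) * screened_sq \<sigma>2 f)))"
  proof (intro mult_left_mono add_left_mono sum_mono)
    fix j assume "j \<in> {..<n}"
    show "(\<integral>\<^sup>+y. Phi f D n j y \<partial>lborel) \<le> ennreal (real n ^ DIM('a) * h ^ (DIM('a) + 1)) * screened_sq \<sigma>2 f"
      unfolding Phi_def by (rule phi_bound[OF fm h n D(3) sig])
  qed simp_all
  also have "(\<Sum>j<n. Wh * (ennreal (real n ^ DIM('a) * h ^ (DIM('a) + 1)) * screened_sq \<sigma>2 f))
      = of_nat n * (Wh * ennreal (real n ^ DIM('a) * h ^ (DIM('a) + 1))) * screened_sq \<sigma>2 f"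
    by (simp add: mult.assoc)
  finally have fin: "emeasure lborel (ball (0::'a) h) * (\<integral>\<^sup>+x. E x \<partial>lborel)
     \<le> ennreal (real (Suc n)) * (V * screened_sq \<sigma>2 f + of_nat n * (Wh * ennreal (real n ^ DIM('a) * h ^ (DIM('a) + 1))) * screened_sq \<sigma>2 f)" .
  have eq: "ennreal (real (Suc n)) * (V * screened_sq \<sigma>2 f + of_nat n * (Wh * ennreal (real n ^ DIM('a) * h ^ (DIM('a) + 1))) * screened_sq \<sigma>2 f)
     = ennreal (real (Suc n)) * (V + of_nat n * (Wh * ennreal (real n ^ DIM('a) * h ^ (DIM('a) + 1)))) * screened_sq \<sigma>2 f"
    by (simp only: distrib_right mult.assoc)
  from fin have fin2: "emeasure lborel (ball (0::'a) h) * (\<integral>\<^sup>+x. E x \<partial>lborel)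
     \<le> ennreal (real (Suc n)) * (V + of_nat n * (Wh * ennreal (real n ^ DIM('a) * h ^ (DIM('a) + 1)))) * screened_sq \<sigma>2 f"
    unfolding eq .
  show "emeasure lborel (ball (0::'a) h) *
     (\<integral>\<^sup>+x. (\<integral>\<^sup>+k. indicator {k. \<sigma>2 x \<le> ereal (norm k) \<and> ereal (norm k) < \<sigma>2 x + ereal M} k *
        ennreal ((f (x + k) - f x)\<^sup>2 / norm k ^ (DIM('a) + 1)) \<partial>lborel) \<partial>lborel)
     \<le> ennreal (real (Suc n)) * (emeasure lborel (ball (0::'a) D) +
         of_nat n * ((\<integral>\<^sup>+v. indicator {v::'a. h \<le> norm v} v * ennreal (1 / norm v ^ (DIM('a)+1)) \<partial>lborel)
           * ennreal (real n ^ DIM('a) * h ^ (DIM('a) + 1)))) * screened_sq \<sigma>2 f"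
    using fin2 unfolding E_def Q_def V_def Wh_def .
qed



theorem proposition3p2:
  fixes h M :: real
  assumes "h > 0"
  shows "\<exists>C::real. C \<ge> 0 \<and>
    (\<forall>(\<sigma>1::'a::euclidean_space \<Rightarrow> ereal) \<sigma>2.
       lsc_ereal \<sigma>1 \<and> lsc_ereal \<sigma>2 \<and>
       (\<forall>x. \<sigma>1 x > 0) \<and> (\<forall>x. \<sigma>2 x > 0) \<and>
       (INF x. min (\<sigma>1 x) (\<sigma>2 x)) > ereal h \<and>
       (AE x in lborel. \<sigma>1 x \<le> \<sigma>2 x + ereal M \<and> \<sigma>2 x \<le> \<sigma>1 x + ereal M)
       \<longrightarrow> (\<forall>f \<in> screened_space \<sigma>2.
              screened_norm \<sigma>1 f \<le> ennreal C * screened_norm \<sigma>2 f))"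
proof -
  have h: "h > 0" by fact
  define D where "D = \<bar>M\<bar> + 2*h"
  define n where "n = nat \<lceil>D / h\<rceil>"
  have Dp: "D > 0" "D \<ge> M + 2*h" using h by (auto simp: D_def)
  have Dh: "D / h > 0" using Dp h by simp
  then have cpos: "\<lceil>D / h\<rceil> > 0" by simp
  then have n1: "n \<ge> 1" unfolding n_def by linarith
  have "real n = real_of_int \<lceil>D / h\<rceil>" unfolding n_def using cpos by simp
  then have "D / h \<le> real n" by linarith
  then have Dn: "D \<le> real n * h" using h by (simp add: field_simps)
  define c where "c = emeasure lborel (ball (0::'a) h)"
  define V where "V = emeasure lborel (ball (0::'a) D)"
  define Wh where "Wh = (\<integral>\<^sup>+v. indicator {v::'a. h \<le> norm v} v * ennreal (1 / norm v ^ (DIM('a)+1)) \<partial>lborel)"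
  define B where "B = ennreal (real (Suc n)) * (V + of_nat n * (Wh * ennreal (real n ^ DIM('a) * h ^ (DIM('a) + 1))))"
  define K where "K = 1 + B / c"
  have c_eq: "c = ennreal (unit_ball_vol (real DIM('a)) * h ^ DIM('a))"
    unfolding c_def using h by (simp add: emeasure_ball)
  have ubv: "unit_ball_vol (real DIM('a)) > 0" by (rule unit_ball_vol_pos) simp
  have "unit_ball_vol (real DIM('a)) * h ^ DIM('a) > 0" using ubv h by simp
  then have c0: "c \<noteq> 0" unfolding c_eq by (metis ennreal_eq_0_iff not_le)
  have ct: "c \<noteq> top" unfolding c_eq by simp
  have Vt: "V < top" unfolding V_def using Dp by (simp add: emeasure_ball)
  have Wt: "Wh < top" unfolding Wh_def using tail_finite[OF h] by simp
  have Bt: "B < top" unfolding B_def using Vt Wt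
    by (simp add: ennreal_mult_less_top of_nat_less_top)
  have "inverse c \<noteq> top" using c0 by simp
  then have "inverse c < top" by (simp only: top.not_eq_extremum)
  then have "B / c < top" using Bt unfolding divide_ennreal_def by (simp add: ennreal_mult_less_top)
  then have Kt: "K < top" unfolding K_def by simp
  define C where "C = sqrt (enn2real K)"
  show ?thesis
  proof (intro exI[of _ C] conjI allI impI ballI)
    show "C \<ge> 0" unfolding C_def by simp
    fix \<sigma>1 \<sigma>2 :: "'a \<Rightarrow> ereal" and f :: "'a \<Rightarrow> real"
    assume asm: "lsc_ereal \<sigma>1 \<and> lsc_ereal \<sigma>2 \<and>
       (\<forall>x. \<sigma>1 x > 0) \<and> (\<forall>x. \<sigma>2 x > 0) \<and>
       (INF x. min (\<sigma>1 x) (\<sigma>2 x)) > ereal h \<and>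
       (AE x in lborel. \<sigma>1 x \<le> \<sigma>2 x + ereal M \<and> \<sigma>2 x \<le> \<sigma>1 x + ereal M)"
    assume fS: "f \<in> screened_space \<sigma>2"
    have fm: "f \<in> borel_measurable borel" using fS by (simp add: screened_space_def L2_loc_def)
    have S2t: "screened_sq \<sigma>2 f < \<infinity>" using fS by (simp add: screened_space_def)
    have s1m: "\<sigma>1 \<in> borel_measurable borel" using asm lsc_meas by blast
    have s2m: "\<sigma>2 \<in> borel_measurable borel" using asm lsc_meas by blast
    have sig: "ereal h < \<sigma>2 y" for y
    proof -
      have "(INF x. min (\<sigma>1 x) (\<sigma>2 x)) \<le> min (\<sigma>1 y) (\<sigma>2 y)" by (rule INF_lower) simp
      then show ?thesis using asm by (meson min.boundedE order_less_le_trans)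
    qed
    have ae: "AE x in lborel. \<sigma>1 x \<le> \<sigma>2 x + ereal M"
      using asm by (auto elim: AE_mp)
    note kb = key_bound[OF fm s1m s2m h n1 Dp(2) Dp(1) Dn sig ae]
    define IE where "IE = (\<integral>\<^sup>+x. (\<integral>\<^sup>+k. indicator {k. \<sigma>2 x \<le> ereal (norm k) \<and> ereal (norm k) < \<sigma>2 x + ereal M} k *
        ennreal ((f (x + k) - f x)\<^sup>2 / norm k ^ (DIM('a) + 1)) \<partial>lborel) \<partial>lborel)"
    have k1: "screened_sq \<sigma>1 f \<le> screened_sq \<sigma>2 f + IE" using kb(1) unfolding IE_def .
    have k2: "c * IE \<le> B * screened_sq \<sigma>2 f" using kb(2) unfolding IE_def c_def B_def V_def Wh_def .
    have "IE = c * IE / c" using c0 ct by (simp add: ennreal_mult_divide_eq mult.commute)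
    also have "\<dots> \<le> B * screened_sq \<sigma>2 f / c" by (rule divide_right_mono_ennreal[OF k2])
    also have "\<dots> = B / c * screened_sq \<sigma>2 f"
      by (metis ennreal_times_divide mult.commute)
    finally have k3: "IE \<le> B / c * screened_sq \<sigma>2 f" .
    have S1K: "screened_sq \<sigma>1 f \<le> K * screened_sq \<sigma>2 f"
    proof -
      have "screened_sq \<sigma>1 f \<le> screened_sq \<sigma>2 f + B / c * screened_sq \<sigma>2 f"
        using k1 k3 by (meson add_left_mono order_trans)
      also have "\<dots> = K * screened_sq \<sigma>2 f" unfolding K_def by (simp add: distrib_right)
      finally show ?thesis .
    qed
    have KS2t: "K * screened_sq \<sigma>2 f < top" using Kt S2t by (simp add: ennreal_mult_less_top)
    then have S1t: "screened_sq \<sigma>1 f < top" using S1K by (meson order_le_less_trans)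
    have r1: "enn2real (screened_sq \<sigma>1 f) \<le> enn2real K * enn2real (screened_sq \<sigma>2 f)"
      using enn2real_mono[OF S1K KS2t] by (simp add: enn2real_mult)
    have "screened_norm \<sigma>1 f = ennreal (sqrt (enn2real (screened_sq \<sigma>1 f)))"
      using S1t by (simp add: screened_norm_def)
    also have "\<dots> \<le> ennreal (sqrt (enn2real K * enn2real (screened_sq \<sigma>2 f)))"
      using r1 by (intro ennreal_leI real_sqrt_le_mono)
    also have "\<dots> = ennreal C * ennreal (sqrt (enn2real (screened_sq \<sigma>2 f)))"
      unfolding C_def by (simp add: real_sqrt_mult ennreal_mult)
    also have "\<dots> = ennreal C * screened_norm \<sigma>2 f"
      using S2t by (simp add: screened_norm_def)
    finally show "screened_norm \<sigma>1 f \<le> ennreal C * screened_norm \<sigma>2 f" .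
  qed
qed

end
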